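(* Let $(X,\mathcal{E})$ be an unbounded normal ballean. The following conditions are equivalent: (1) every bounded slowly oscillating function $f:X\to\mathbb{R}$ is constant at infinity; (2) the corona $\nu(X,\mathcal{E})$ is a singleton; (3) $(X,\mathcal{E})$ is ultranormal.
   Context: A coarse structure on a set $X$ is a family $\mathcal{E}$ of subsets of $X\times X$ (entourages) such that each $E\in\mathcal{E}$ contains the diagonal $\Delta_X$; $E,E'\in\mathcal{E}$ implies $E\circ E'\in\mathcal{E}$ and $E^{-1}\in\mathcal{E}$; $\Delta_X\subseteq E'\subseteq E\in\mathcal{E}$ implies $E'\in\mathcal{E}$; and every pair $(x,y)$ lies in some $E\in\mathcal{E}$. The pair $(X,\mathcal{E})$ is a ballean. For $E\in\mathcal{E}$, $E[x]=\{y:(x,y)\in E\}$ and $E[A]=\bigcup_{a\in A}E[a]$. A set $Y\subseteq X$ is bounded if $Y\subseteq E[x]$ for some $x\in X$, $E\in\mathcal{E}$; the ballean is unbounded if $X$ is not bounded. $U$ is an asymptotic neighbourhood of $Y$ if $E[Y]\setminus U$ is bounded for every $E\in\mathcal{E}$. Subsets $Y,Z$ are asymptotically disjoint if $E[Y]\cap E[Z]$ is bounded for every $E\in\mathcal{E}$, and asymptotically separated if they have disjoint asymptotic neighbourhoods. The ballean is normal if any two asymptotically disjoint subsets are asymptotically separated, and ultranormal if it is unbounded and no two unbounded subsets are asymptotically disjoint. A function $f:X\to\mathbb{R}$ is slowly oscillating if for every $E\in\mathcal{E}$ and $\varepsilon>0$ there is a bounded $B$ with $\operatorname{diam} f(E[x])<\varepsilon$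 for all $x\in X\setminus B$; it is constant at infinity if there is $c\in\mathbb{R}$ such that for every $\varepsilon>0$ the set $\{x:|f(x)-c|>\varepsilon\}$ is bounded. Corona: give $X$ the discrete topology, identify $\beta X$ with the ultrafilters on $X$, and let $X^\sharp=\{p\in\beta X: \text{every } P\in p \text{ is unbounded}\}$. For $p,q\in X^\sharp$ write $p\parallel q$ if there is $E\in\mathcal{E}$ with $E[Q]\in p$ for every $Q\in q$ (an equivalence relation). Let $\sim$ be the smallest equivalence relation on $X^\sharp$ that is closed in $X^\sharp\times X^\sharp$ and contains $\parallel$. The corona is $\nu(X,\mathcal{E})=X^\sharp/\sim$. *)

theory Defs
  imports "HOL-Analysis.Analysis"
begin

definition ballean :: "'a set \<Rightarrow> ('a \<times> 'a) set set \<Rightarrow> bool" where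
  "ballean X \<E> \<longleftrightarrow>
     (\<forall>E\<in>\<E>. Id_on X \<subseteq> E \<and> E \<subseteq> X \<times> X) \<and>
     (\<forall>E\<in>\<E>. \<forall>E'\<in>\<E>. E O E' \<in> \<E>) \<and>
     (\<forall>E\<in>\<E>. E\<inverse> \<in> \<E>) \<and>
     (\<forall>E\<in>\<E>. \<forall>E'. Id_on X \<subseteq> E' \<and> E' \<subseteq> E \<longrightarrow> E' \<in> \<E>) \<and>
     (\<forall>x\<in>X. \<forall>y\<in>X. \<exists>E\<in>\<E>. (x, y) \<in> E)"

definition bl_bounded :: "'a set \<Rightarrow> ('a \<times> 'a) set set \<Rightarrow> 'a set \<Rightarrow> bool" where
  "bl_bounded X \<E> Y \<longleftrightarrow> Y \<subseteq> X \<and> (Y = {} \<or> (\<exists>x\<in>X. \<exists>E\<in>\<E>. Y \<subseteq> E `` {x}))"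

definition bl_unbounded :: "'a set \<Rightarrow> ('a \<times> 'a) set set \<Rightarrow> bool" where
  "bl_unbounded X \<E> \<longleftrightarrow> \<not> bl_bounded X \<E> X"

definition asymp_nbhd :: "'a set \<Rightarrow> ('a \<times> 'a) set set \<Rightarrow> 'a set \<Rightarrow> 'a set \<Rightarrow> bool" where
  "asymp_nbhd X \<E> U Y \<longleftrightarrow> (\<forall>E\<in>\<E>. bl_bounded X \<E> (E `` Y - U))"

definition asymp_disjoint :: "'a set \<Rightarrow> ('a \<times> 'a) set set \<Rightarrow> 'a set \<Rightarrow> 'a set \<Rightarrow> bool" where
  "asymp_disjoint X \<E> Y Z \<longleftrightarrow> (\<forall>E\<in>\<E>. bl_bounded X \<E> (E `` Y \<inter> E `` Z))"

definition asymp_separated :: "'a set \<Rightarrow> ('a \<times> 'a) set set \<Rightarrow> 'a set \<Rightarrow> 'a set \<Rightarrow> bool" where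
  "asymp_separated X \<E> Y Z \<longleftrightarrow>
     (\<exists>U V. U \<subseteq> X \<and> V \<subseteq> X \<and> U \<inter> V = {} \<and> asymp_nbhd X \<E> U Y \<and> asymp_nbhd X \<E> V Z)"

definition bl_normal :: "'a set \<Rightarrow> ('a \<times> 'a) set set \<Rightarrow> bool" where
  "bl_normal X \<E> \<longleftrightarrow>
     (\<forall>Y Z. Y \<subseteq> X \<and> Z \<subseteq> X \<and> asymp_disjoint X \<E> Y Z \<longrightarrow> asymp_separated X \<E> Y Z)"

definition bl_ultranormal :: "'a set \<Rightarrow> ('a \<times> 'a) set set \<Rightarrow> bool" where
  "bl_ultranormal X \<E> \<longleftrightarrow> bl_unbounded X \<E> \<and>
     (\<forall>Y Z. Y \<subseteq> X \<and> Z \<subseteq> X \<and> \<not> bl_bounded X \<E> Y \<and> \<not> bl_bounded X \<E> Z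
        \<longrightarrow> \<not> asymp_disjoint X \<E> Y Z)"

text \<open>diam f(A) < eps, written without Sup: there is delta < eps bounding all oscillations.\<close>
definition diam_less :: "('a \<Rightarrow> real) \<Rightarrow> 'a set \<Rightarrow> real \<Rightarrow> bool" where
  "diam_less f A \<epsilon> \<longleftrightarrow> (\<exists>\<delta><\<epsilon>. \<forall>y\<in>A. \<forall>z\<in>A. \<bar>f y - f z\<bar> \<le> \<delta>)"

definition slowly_oscillating :: "'a set \<Rightarrow> ('a \<times> 'a) set set \<Rightarrow> ('a \<Rightarrow> real) \<Rightarrow> bool" where
  "slowly_oscillating X \<E> f \<longleftrightarrow>
     (\<forall>E\<in>\<E>. \<forall>\<epsilon>>0. \<exists>B. bl_bounded X \<E> B \<and> (\<forall>x\<in>X - B. diam_less f (E `` {x}) \<epsilon>))"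

definition const_at_infinity :: "'a set \<Rightarrow> ('a \<times> 'a) set set \<Rightarrow> ('a \<Rightarrow> real) \<Rightarrow> bool" where
  "const_at_infinity X \<E> f \<longleftrightarrow>
     (\<exists>c. \<forall>\<epsilon>>0. bl_bounded X \<E> {x\<in>X. \<bar>f x - c\<bar> > \<epsilon>})"

definition bounded_fun_on :: "'a set \<Rightarrow> ('a \<Rightarrow> real) \<Rightarrow> bool" where
  "bounded_fun_on X f \<longleftrightarrow> (\<exists>M. \<forall>x\<in>X. \<bar>f x\<bar> \<le> M)"

text \<open>Ultrafilters on the (discrete) set X, i.e. points of beta X.\<close>
definition ultrafilter_on :: "'a set \<Rightarrow> 'a set set \<Rightarrow> bool" where
  "ultrafilter_on X p \<longleftrightarrow> p \<subseteq> Pow X \<and> X \<in> p \<and> {} \<notin> p \<and>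
     (\<forall>A\<in>p. \<forall>B\<in>p. A \<inter> B \<in> p) \<and>
     (\<forall>A\<in>p. \<forall>B. A \<subseteq> B \<and> B \<subseteq> X \<longrightarrow> B \<in> p) \<and>
     (\<forall>A. A \<subseteq> X \<longrightarrow> A \<in> p \<or> X - A \<in> p)"

definition betaX :: "'a set \<Rightarrow> 'a set set set" where
  "betaX X = {p. ultrafilter_on X p}"

definition beta_topology :: "'a set \<Rightarrow> 'a set set topology" where
  "beta_topology X = topology_generated_by {{p \<in> betaX X. A \<in> p} | A. A \<subseteq> X}"

definition sharp :: "'a set \<Rightarrow> ('a \<times> 'a) set set \<Rightarrow> 'a set set set" where
  "sharp X \<E> = {p \<in> betaX X. \<forall>P\<in>p. \<not> bl_bounded X \<E> P}"

definition sharp_topology :: "'a set \<Rightarrow> ('a \<times> 'a) set set \<Rightarrow> 'a set set topology" where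
  "sharp_topology X \<E> = subtopology (beta_topology X) (sharp X \<E>)"

definition parallel_rel :: "'a set \<Rightarrow> ('a \<times> 'a) set set \<Rightarrow> ('a set set \<times> 'a set set) set" where
  "parallel_rel X \<E> = {(p, q). p \<in> sharp X \<E> \<and> q \<in> sharp X \<E> \<and> (\<exists>E\<in>\<E>. \<forall>Q\<in>q. E `` Q \<in> p)}"

definition corona_rel :: "'a set \<Rightarrow> ('a \<times> 'a) set set \<Rightarrow> ('a set set \<times> 'a set set) set" where
  "corona_rel X \<E> = \<Inter>{R. equiv (sharp X \<E>) R \<and>
       closedin (prod_topology (sharp_topology X \<E>) (sharp_topology X \<E>)) R \<and>
       parallel_rel X \<E> \<subseteq> R}"

definition corona :: "'a set \<Rightarrow> ('a \<times> 'a) set set \<Rightarrow> 'a set set set set" where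
  "corona X \<E> = sharp X \<E> // corona_rel X \<E>"

end

theory Submission
  imports Defs
begin



locale coarse =
  fixes X :: "'a set" and EE :: "('a \<times> 'a) set set"
  assumes ball: "ballean X EE" and Xne: "X \<noteq> {}"
begin

abbreviation bd where "bd Y \<equiv> bl_bounded X EE Y"

lemmas ball_parts =
  ball[unfolded ballean_def, THEN conjunct1]
  ball[unfolded ballean_def, THEN conjunct2, THEN conjunct1]
  ball[unfolded ballean_def, THEN conjunct2, THEN conjunct2, THEN conjunct1]
  ball[unfolded ballean_def, THEN conjunct2, THEN conjunct2, THEN conjunct2, THEN conjunct1]
  ball[unfolded ballean_def, THEN conjunct2, THEN conjunct2, THEN conjunct2, THEN conjunct2]

lemma E_sub: "E \<in> EE \<Longrightarrow> E \<subseteq> X \<times> X" using ball_parts(1) by simp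
lemma E_Id: "E \<in> EE \<Longrightarrow> Id_on X \<subseteq> E" using ball_parts(1) by simp
lemma E_inv: "E \<in> EE \<Longrightarrow> E\<inverse> \<in> EE" using ball_parts(3) by simp
lemma E_comp: "E \<in> EE \<Longrightarrow> F \<in> EE \<Longrightarrow> E O F \<in> EE" using ball_parts(2) by simp
lemma E_down: "E \<in> EE \<Longrightarrow> Id_on X \<subseteq> F \<Longrightarrow> F \<subseteq> E \<Longrightarrow> F \<in> EE" using ball_parts(4) by blast
lemma E_conn: "x \<in> X \<Longrightarrow> y \<in> X \<Longrightarrow> \<exists>E\<in>EE. (x,y) \<in> E" using ball_parts(5) by simp

lemma Id_in: "Id_on X \<in> EE"
proof -
  obtain x where x: "x \<in> X" using Xne by auto
  obtain E where E: "E \<in> EE" using E_conn[OF x x] by auto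
  show ?thesis using E_down[OF E _ E_Id[OF E]] by simp
qed

lemma E_un: assumes "E \<in> EE" "F \<in> EE" shows "E \<union> F \<in> EE"
proof -
  have "E \<union> F \<subseteq> E O F"
  proof
    fix z assume z: "z \<in> E \<union> F"
    obtain a b where ab: "z = (a,b)" by force
    show "z \<in> E O F"
    proof (cases "z \<in> E")
      case True
      then have "b \<in> X" using E_sub[OF assms(1)] ab by blast
      then have "(b,b) \<in> F" using E_Id[OF assms(2)] by blast
      then show ?thesis using True ab by blast
    next
      case False
      then have zF: "(a,b) \<in> F" using z ab by blast
      then have "a \<in> X" using E_sub[OF assms(2)] by blast
      then have "(a,a) \<in> E" using E_Id[OF assms(1)] by blast
      then show ?thesis using zF ab by blast
    qed
  qed
  moreover have "Id_on X \<subseteq> E \<union> F" using E_Id[OF assms(1)] by blast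
  ultimately show ?thesis by (intro E_down[OF E_comp[OF assms]])
qed

lemma E_self: "E \<in> EE \<Longrightarrow> A \<subseteq> X \<Longrightarrow> A \<subseteq> E `` A"
  using E_Id by blast

lemma E_img_sub: "E \<in> EE \<Longrightarrow> E `` A \<subseteq> X" using E_sub by blast

lemma bd_empty: "bd {}" unfolding bl_bounded_def by simp

lemma bd_sub: "bd A \<Longrightarrow> B \<subseteq> A \<Longrightarrow> bd B"
  unfolding bl_bounded_def by blast

lemma bd_subX: "bd A \<Longrightarrow> A \<subseteq> X" unfolding bl_bounded_def by blast

lemma bd_img: assumes "bd A" "E \<in> EE" shows "bd (E `` A)"
proof (cases "A = {}")
  case True then show ?thesis by (simp add: bd_empty)
next
  case False
  then obtain x F where x: "x \<in> X" "F \<in> EE" "A \<subseteq> F `` {x}" using assms unfolding bl_bounded_def by blast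
  have "E `` A \<subseteq> (F O E) `` {x}" using x(3) by blast
  then show ?thesis unfolding bl_bounded_def using x E_comp[OF x(2) assms(2)] E_img_sub[OF assms(2)] by blast
qed

lemma bd_un: assumes "bd A" "bd B" shows "bd (A \<union> B)"
proof (cases "A = {}")
  case True then show ?thesis using assms by simp
next
  case FA: False
  show ?thesis
  proof (cases "B = {}")
    case True then show ?thesis using assms by simp
  next
    case False
    obtain x E where x: "x \<in> X" "E \<in> EE" "A \<subseteq> E `` {x}" using assms FA unfolding bl_bounded_def by blast
    obtain y F where y: "y \<in> X" "F \<in> EE" "B \<subseteq> F `` {y}" using assms False unfolding bl_bounded_def by blast
    obtain G where G: "G \<in> EE" "(x,y) \<in> G" using E_conn x y by blast
    have "A \<union> B \<subseteq> (E \<union> G O F) `` {x}" using x(3) y(3) G(2) by blast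
    moreover have "E \<union> G O F \<in> EE" using E_un E_comp x y G by blast
    ultimately show ?thesis unfolding bl_bounded_def using x assms bd_subX by blast
  qed
qed

lemma bd_UN: "(\<And>k. k < (n::nat) \<Longrightarrow> bd (A k)) \<Longrightarrow> bd (\<Union>k<n. A k)"
proof (induction n)
  case 0 then show ?case by (simp add: bd_empty)
next
  case (Suc n)
  have "(\<Union>k<Suc n. A k) = (\<Union>k<n. A k) \<union> A n" by (auto simp: lessThan_Suc)
  then show ?case using Suc bd_un by simp
qed

lemma Id_img: "A \<subseteq> X \<Longrightarrow> Id_on X `` A = A" by blast

lemma unbd_X: "\<not> bd Y \<Longrightarrow> Y \<subseteq> Z \<Longrightarrow> Z \<subseteq> X \<Longrightarrow> \<not> bd Z"
  using bd_sub by blast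

lemma uf_exists:
  assumes G: "G \<subseteq> Pow X" "G \<noteq> {}" "\<forall>A\<in>G. \<forall>B\<in>G. A \<inter> B \<in> G" "\<forall>A\<in>G. \<not> bd A"
  shows "\<exists>p. ultrafilter_on X p \<and> G \<subseteq> p \<and> (\<forall>P\<in>p. \<not> bd P)"
proof -
  define S where "S = {F. G \<subseteq> F \<and> F \<subseteq> Pow X \<and> (\<forall>A\<in>F. \<forall>B\<in>F. A \<inter> B \<in> F) \<and> (\<forall>A\<in>F. \<not> bd A)}"
  have "\<forall>C\<in>chains S. \<exists>U\<in>S. \<forall>F\<in>C. F \<subseteq> U"
  proof
    fix C assume C: "C \<in> chains S"
    show "\<exists>U\<in>S. \<forall>F\<in>C. F \<subseteq> U"
    proof (cases "C = {}")
      case True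
      have "G \<in> S" unfolding S_def using G by blast
      then show ?thesis using True by blast
    next
      case False
      have CS: "C \<subseteq> S" and ch: "\<forall>A\<in>C. \<forall>B\<in>C. A \<subseteq> B \<or> B \<subseteq> A"
        using C unfolding chains_def chain_subset_def by auto
      have "\<Union>C \<in> S"
        unfolding S_def
      proof (intro CollectI conjI ballI)
        obtain F0 where "F0 \<in> C" using False by blast
        then have "G \<subseteq> F0" using CS unfolding S_def by blast
        then show "G \<subseteq> \<Union>C" using \<open>F0 \<in> C\<close> by blast
        show "\<Union>C \<subseteq> Pow X" using CS unfolding S_def by blast
        show "\<not> bd A" if "A \<in> \<Union>C" for A using that CS unfolding S_def by blast
        fix A B assume A: "A \<in> \<Union>C" and B: "B \<in> \<Union>C"
        then obtain FA FB where F: "FA \<in> C" "FB \<in> C" "A \<in> FA" "B \<in> FB" by blast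
        then have "FA \<subseteq> FB \<or> FB \<subseteq> FA" using ch by blast
        then show "A \<inter> B \<in> \<Union>C" using F CS unfolding S_def by blast
      qed
      then show ?thesis by blast
    qed
  qed
  from Zorn_Lemma2[OF this] obtain M where M: "M \<in> S" "\<forall>F\<in>S. M \<subseteq> F \<longrightarrow> F = M" by blast
  have MG: "G \<subseteq> M" and MX: "M \<subseteq> Pow X" and Mint: "\<forall>A\<in>M. \<forall>B\<in>M. A \<inter> B \<in> M"
    and Mbd: "\<forall>A\<in>M. \<not> bd A" using M(1) unfolding S_def by auto
  have ext: "D \<in> M" if D: "D \<subseteq> X" "\<forall>C\<in>M. \<not> bd (C \<inter> D)" for D
  proof -
    define F where "F = {B. B \<subseteq> X \<and> (\<exists>C\<in>M. C \<inter> D \<subseteq> B)}"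
    have "F \<in> S" unfolding S_def
    proof (intro CollectI conjI ballI)
      show "G \<subseteq> F" using MG MX unfolding F_def by blast
      show "F \<subseteq> Pow X" unfolding F_def by blast
      fix A assume "A \<in> F"
      then obtain C where "C \<in> M" "C \<inter> D \<subseteq> A" "A \<subseteq> X" unfolding F_def by blast
      then show "\<not> bd A" using D bd_sub by blast
    next
      fix A B assume "A \<in> F" "B \<in> F"
      then obtain C1 C2 where "C1 \<in> M" "C1 \<inter> D \<subseteq> A" "A \<subseteq> X" "C2 \<in> M" "C2 \<inter> D \<subseteq> B" "B \<subseteq> X"
        unfolding F_def by blast
      moreover then have "C1 \<inter> C2 \<in> M" using Mint by blast
      ultimately show "A \<inter> B \<in> F" unfolding F_def by blast
    qed
    moreover have "M \<subseteq> F" unfolding F_def using MX by blast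
    ultimately have "F = M" using M(2) by blast
    moreover have "D \<in> F" unfolding F_def using D MG G(2) by blast
    ultimately show ?thesis by simp
  qed
  have Mup: "B \<in> M" if "A \<in> M" "A \<subseteq> B" "B \<subseteq> X" for A B
  proof (rule ext)
    show "B \<subseteq> X" by fact
    show "\<forall>C\<in>M. \<not> bd (C \<inter> B)"
    proof
      fix C assume "C \<in> M"
      then have "C \<inter> A \<in> M" using Mint that by blast
      then have "\<not> bd (C \<inter> A)" using Mbd by blast
      then show "\<not> bd (C \<inter> B)" using that bd_sub[of "C \<inter> B" "C \<inter> A"] by blast
    qed
  qed
  have "ultrafilter_on X M" unfolding ultrafilter_on_def
  proof (intro conjI ballI allI impI)
    show "M \<subseteq> Pow X" by fact
    obtain A where "A \<in> G" using G(2) by blast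
    then show "X \<in> M" using Mup MG MX by blast
    show "{} \<notin> M" using Mbd bd_empty by blast
    show "A \<inter> B \<in> M" if "A \<in> M" "B \<in> M" for A B using Mint that by blast
    show "B \<in> M" if "A \<in> M" "A \<subseteq> B \<and> B \<subseteq> X" for A B using Mup that by blast
  next
    fix A assume AX: "A \<subseteq> X"
    show "A \<in> M \<or> X - A \<in> M"
    proof (rule ccontr)
      assume nn: "\<not> (A \<in> M \<or> X - A \<in> M)"
      then obtain C1 where C1: "C1 \<in> M" "bd (C1 \<inter> A)" using ext AX by blast
      obtain C2 where C2: "C2 \<in> M" "bd (C2 \<inter> (X - A))" using ext[of "X - A"] nn by blast
      have "C1 \<inter> C2 \<subseteq> (C1 \<inter> A) \<union> (C2 \<inter> (X - A))" using C1 MX by blast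
      then have "bd (C1 \<inter> C2)" using bd_un C1 C2 bd_sub by blast
      moreover have "C1 \<inter> C2 \<in> M" using Mint C1 C2 by blast
      ultimately show False using Mbd by blast
    qed
  qed
  then show ?thesis using MG Mbd by blast
qed

end



primrec useq :: "('b \<Rightarrow> 'b \<Rightarrow> 'b) \<Rightarrow> 'b \<Rightarrow> 'b \<Rightarrow> nat \<Rightarrow> nat \<Rightarrow> 'b" where
  "useq h a b 0 k = (if k = 0 then a else b)"
| "useq h a b (Suc n) k = (if even k then useq h a b n (k div 2)
      else h (useq h a b n (k div 2)) (useq h a b n (Suc (k div 2))))"

lemma useq_double: "useq h a b (Suc n) (2*k) = useq h a b n k" by simp
lemma useq_odd: "useq h a b (Suc n) (2*k+1) = h (useq h a b n k) (useq h a b n (Suc k))" by simp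

lemma useq_lift: "useq h a b (n+m) (k*2^m) = useq h a b n k"
proof (induction m arbitrary: k)
  case 0 then show ?case by simp
next
  case (Suc m)
  have "useq h a b (n + Suc m) (k * 2 ^ Suc m) = useq h a b (Suc (n+m)) (2*(k*2^m))"
    by (simp add: ac_simps)
  also have "\<dots> = useq h a b (n+m) (k*2^m)" by (rule useq_double)
  finally show ?case using Suc by simp
qed

lemma useq_adj:
  assumes hP: "\<And>A B. P A B \<Longrightarrow> P A (h A B) \<and> P (h A B) B" and ab: "P a b"
  shows "j < 2^n \<Longrightarrow> P (useq h a b n j) (useq h a b n (Suc j))"
proof (induction n arbitrary: j)
  case 0 then show ?case using ab by simp
next
  case (Suc n)
  obtain i where "j = 2*i \<or> j = 2*i+1" by (metis oddE evenE)
  then show ?case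
  proof
    assume j: "j = 2*i"
    then have "i < 2^n" using Suc.prems by simp
    then have "P (useq h a b n i) (useq h a b n (Suc i))" using Suc.IH by blast
    moreover have "Suc j = 2*i+1" using j by simp
    ultimately show ?thesis using j hP by (simp only: useq_double useq_odd)
  next
    assume j: "j = 2*i+1"
    then have "i < 2^n" using Suc.prems by simp
    then have "P (useq h a b n i) (useq h a b n (Suc i))" using Suc.IH by blast
    moreover have "Suc j = 2*(Suc i)" using j by simp
    ultimately show ?thesis using j hP by (simp only: useq_double useq_odd)
  qed
qed

lemma useq_chain:
  assumes hP: "\<And>A B. P A B \<Longrightarrow> P A (h A B) \<and> P (h A B) B" and ab: "P a b"
    and tr: "\<And>A B C. P A B \<Longrightarrow> P B C \<Longrightarrow> P A C"
  shows "k < l \<Longrightarrow> l \<le> 2^n \<Longrightarrow> P (useq h a b n k) (useq h a b n l)"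
proof (induction l)
  case 0 then show ?case by simp
next
  case (Suc l)
  have adj: "P (useq h a b n l) (useq h a b n (Suc l))" using useq_adj[OF hP ab] Suc.prems by simp
  show ?case
  proof (cases "k = l")
    case True then show ?thesis using adj by simp
  next
    case False
    then have "P (useq h a b n k) (useq h a b n l)" using Suc by simp
    then show ?thesis using tr adj by blast
  qed
qed

context coarse
begin

abbreviation ad where "ad A B \<equiv> asymp_disjoint X EE A B"
abbreviation prec where "prec A B \<equiv> ad A (X - B)"

lemma ad_sym: "ad A B \<Longrightarrow> ad B A" unfolding asymp_disjoint_def by (simp add: Int_commute)

lemma ad_mono: "ad A B \<Longrightarrow> A' \<subseteq> A \<Longrightarrow> B' \<subseteq> B \<Longrightarrow> ad A' B'"
  unfolding asymp_disjoint_def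
proof
  fix E assume "\<forall>E\<in>EE. bd (E `` A \<inter> E `` B)" "A' \<subseteq> A" "B' \<subseteq> B" "E \<in> EE"
  moreover have "E `` A' \<inter> E `` B' \<subseteq> E `` A \<inter> E `` B" using calculation by blast
  ultimately show "bd (E `` A' \<inter> E `` B')" using bd_sub by blast
qed

lemma ad_un_l: "ad A C \<Longrightarrow> ad B C \<Longrightarrow> ad (A \<union> B) C"
  unfolding asymp_disjoint_def
proof
  fix E assume "\<forall>E\<in>EE. bd (E `` A \<inter> E `` C)" "\<forall>E\<in>EE. bd (E `` B \<inter> E `` C)" "E \<in> EE"
  then have "bd ((E `` A \<inter> E `` C) \<union> (E `` B \<inter> E `` C))" using bd_un by blast
  moreover have "E `` (A \<union> B) \<inter> E `` C = (E `` A \<inter> E `` C) \<union> (E `` B \<inter> E `` C)" by blast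
  ultimately show "bd (E `` (A \<union> B) \<inter> E `` C)" by simp
qed

lemma ad_un_r: "ad C A \<Longrightarrow> ad C B \<Longrightarrow> ad C (A \<union> B)"
  using ad_un_l ad_sym by blast

lemma ad_nbhd: assumes "asymp_nbhd X EE W S" "T \<inter> W = {}" shows "ad T S"
  unfolding asymp_disjoint_def
proof
  fix E assume E: "E \<in> EE"
  define F where "F = E O E\<inverse>"
  have F: "F \<in> EE" unfolding F_def using E E_inv E_comp by blast
  have B0: "bd (F `` S - W)" using assms(1) F unfolding asymp_nbhd_def by blast
  have "E `` T \<inter> E `` S \<subseteq> E `` (F `` S - W)"
  proof
    fix z assume "z \<in> E `` T \<inter> E `` S"
    then obtain t s where ts: "t \<in> T" "(t,z) \<in> E" "s \<in> S" "(s,z) \<in> E" by blast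
    then have "(s,t) \<in> F" unfolding F_def by blast
    then have "t \<in> F `` S - W" using ts assms(2) by blast
    then show "z \<in> E `` (F `` S - W)" using ts by blast
  qed
  then show "bd (E `` T \<inter> E `` S)" using bd_img[OF B0 E] bd_sub by blast
qed

lemma ad_trans: assumes "prec A B" "prec B C" shows "prec A C"
  unfolding asymp_disjoint_def
proof
  fix E assume E: "E \<in> EE"
  have 1: "bd (E `` A \<inter> E `` (X - B))" using assms(1) E unfolding asymp_disjoint_def by blast
  have 2: "bd (E `` B \<inter> E `` (X - C))" using assms(2) E unfolding asymp_disjoint_def by blast
  have "E `` A \<inter> E `` (X - C) \<subseteq> (E `` A \<inter> E `` (X - B)) \<union> (E `` B \<inter> E `` (X - C))" by blast
  then show "bd (E `` A \<inter> E `` (X - C))" using bd_un[OF 1 2] bd_sub by blast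
qed

lemma ad_Id: assumes "ad A B" shows "bd (A \<inter> B \<inter> X)"
proof -
  have "bd (Id_on X `` A \<inter> Id_on X `` B)" using assms Id_in unfolding asymp_disjoint_def by blast
  moreover have "A \<inter> B \<inter> X \<subseteq> Id_on X `` A \<inter> Id_on X `` B" by blast
  ultimately show ?thesis using bd_sub by blast
qed

lemma uf_sub: "ultrafilter_on X p \<Longrightarrow> A \<in> p \<Longrightarrow> A \<subseteq> X" unfolding ultrafilter_on_def by blast
lemma uf_up: "ultrafilter_on X p \<Longrightarrow> A \<in> p \<Longrightarrow> A \<subseteq> B \<Longrightarrow> B \<subseteq> X \<Longrightarrow> B \<in> p"
  unfolding ultrafilter_on_def by blast
lemma uf_int: "ultrafilter_on X p \<Longrightarrow> A \<in> p \<Longrightarrow> B \<in> p \<Longrightarrow> A \<inter> B \<in> p"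
  unfolding ultrafilter_on_def by blast
lemma uf_X: "ultrafilter_on X p \<Longrightarrow> X \<in> p"
  unfolding ultrafilter_on_def by blast
lemma uf_compl: "ultrafilter_on X p \<Longrightarrow> A \<subseteq> X \<Longrightarrow> A \<notin> p \<Longrightarrow> X - A \<in> p"
  unfolding ultrafilter_on_def by blast
lemma uf_not_both: "ultrafilter_on X p \<Longrightarrow> A \<in> p \<Longrightarrow> X - A \<in> p \<Longrightarrow> False"
proof -
  assume u: "ultrafilter_on X p" "A \<in> p" "X - A \<in> p"
  then have "A \<inter> (X - A) \<in> p" using uf_int by blast
  moreover have "A \<inter> (X - A) = {}" by blast
  ultimately show False using u(1) unfolding ultrafilter_on_def by simp
qed

lemma sh_uf: "p \<in> sharp X EE \<Longrightarrow> ultrafilter_on X p" unfolding sharp_def betaX_def by blast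
lemma sh_unbd: "p \<in> sharp X EE \<Longrightarrow> A \<in> p \<Longrightarrow> \<not> bd A" unfolding sharp_def by blast

lemma sh_prec: assumes p: "p \<in> sharp X EE" and "prec A B" "A \<in> p" "B \<subseteq> X" shows "B \<in> p"
proof (rule ccontr)
  assume "B \<notin> p"
  then have "X - B \<in> p" using uf_compl sh_uf p assms by blast
  then have "A \<inter> (X - B) \<in> p" using uf_int sh_uf p assms by blast
  moreover have "bd (A \<inter> (X - B) \<inter> X)" using ad_Id assms by blast
  moreover have "A \<inter> (X - B) \<inter> X = A \<inter> (X - B)" by blast
  ultimately show False using sh_unbd p by simp
qed

lemma sh_exists: assumes "\<not> bd W" "W \<subseteq> X" shows "\<exists>p\<in>sharp X EE. W \<in> p"
proof -
  have "\<exists>p. ultrafilter_on X p \<and> {W} \<subseteq> p \<and> (\<forall>P\<in>p. \<not> bd P)"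
    by (rule uf_exists) (use assms in auto)
  then show ?thesis unfolding sharp_def betaX_def by blast
qed

end

locale nsep = coarse +
  fixes Y Z :: "'a set"
  assumes normal: "bl_normal X EE"
    and Y: "Y \<subseteq> X" "\<not> bd Y" and Z: "Z \<subseteq> X" "\<not> bd Z" and YZ: "ad Y Z"
begin

lemma interp_ex: assumes "A \<subseteq> B" "B \<subseteq> X" "prec A B"
  shows "\<exists>C. A \<subseteq> C \<and> C \<subseteq> B \<and> prec A C \<and> prec C B"
proof -
  have AX: "A \<subseteq> X" "X - B \<subseteq> X" using assms by auto
  have "asymp_separated X EE A (X - B)" using normal AX assms(3) unfolding bl_normal_def by blast
  then obtain U V where UV: "U \<subseteq> X" "V \<subseteq> X" "U \<inter> V = {}" "asymp_nbhd X EE U A"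
    "asymp_nbhd X EE V (X - B)" unfolding asymp_separated_def by blast
  have "ad (X - U) A" by (rule ad_nbhd[OF UV(4)]) auto
  then have pAU: "prec A U" by (rule ad_sym)
  have pUB: "prec U B" by (rule ad_nbhd[OF UV(5)]) (use UV(3) in auto)
  define C where "C = (U \<union> A) \<inter> B"
  have 1: "ad A ((X - U) \<union> (X - B))" using ad_un_r[OF pAU assms(3)] .
  have "X - C \<subseteq> (X - U) \<union> (X - B)" unfolding C_def by auto
  then have 2: "prec A C" using ad_mono[OF 1, of A "X - C"] by simp
  have 3: "ad (U \<union> A) (X - B)" using ad_un_l[OF pUB assms(3)] .
  have "C \<subseteq> U \<union> A" unfolding C_def by auto
  then have 4: "prec C B" using ad_mono[OF 3, of C "X - B"] by simp
  have "A \<subseteq> C" "C \<subseteq> B" using assms unfolding C_def by auto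
  then show ?thesis using 2 4 by blast
qed

definition PP where "PP A B \<longleftrightarrow> A \<subseteq> B \<and> B \<subseteq> X \<and> prec A B"

definition interp where "interp A B = (SOME C. A \<subseteq> C \<and> C \<subseteq> B \<and> prec A C \<and> prec C B)"

lemma interp_PP: "PP A B \<Longrightarrow> PP A (interp A B) \<and> PP (interp A B) B"
proof -
  assume "PP A B"
  then have "\<exists>C. A \<subseteq> C \<and> C \<subseteq> B \<and> prec A C \<and> prec C B" using interp_ex unfolding PP_def by blast
  then have "A \<subseteq> interp A B \<and> interp A B \<subseteq> B \<and> prec A (interp A B) \<and> prec (interp A B) B"
    unfolding interp_def by (rule someI_ex)
  then show ?thesis using \<open>PP A B\<close> unfolding PP_def by blast
qed

lemma PP_trans: "PP A B \<Longrightarrow> PP B C \<Longrightarrow> PP A C"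
  unfolding PP_def using ad_trans[of A B C] by auto

definition Y' where "Y' = Y - Z"

lemma U0_ex: "\<exists>C. Y' \<subseteq> C \<and> C \<subseteq> X - Z \<and> prec Y' C \<and> prec C (X - Z)"
proof (rule interp_ex)
  show "Y' \<subseteq> X - Z" unfolding Y'_def using Y by blast
  show "X - Z \<subseteq> X" by blast
  have "X - (X - Z) = Z" using Z by blast
  then show "prec Y' (X - Z)" using ad_mono[OF YZ] unfolding Y'_def by simp
qed

definition U0 where "U0 = (SOME C. Y' \<subseteq> C \<and> C \<subseteq> X - Z \<and> prec Y' C \<and> prec C (X - Z))"

lemma U0: "Y' \<subseteq> U0 \<and> U0 \<subseteq> X - Z \<and> prec Y' U0 \<and> prec U0 (X - Z)"
  unfolding U0_def using U0_ex by (rule someI_ex)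

definition U where "U n k = useq interp U0 (X - Z) n k"

lemma PP01: "PP U0 (X - Z)" unfolding PP_def using U0 by blast

lemma U_chain: assumes "k < l" "l \<le> 2^n" shows "PP (U n k) (U n l)"
  unfolding U_def
  apply (rule useq_chain[where P=PP])
      apply (erule interp_PP)
     apply (rule PP01)
    apply (erule (1) PP_trans)
   apply (rule assms)+
  done

lemma U_lift: "U (n+m) (k*2^m) = U n k" unfolding U_def by (rule useq_lift)

lemma U_top: "U n (2^n) = X - Z"
  using U_lift[of 0 n 1] unfolding U_def by simp

lemma U_bot: "U n 0 = U0"
  using U_lift[of 0 n 0] unfolding U_def by simp

lemma U_sub: "k \<le> 2^n \<Longrightarrow> U n k \<subseteq> X - Z"
proof -
  assume k: "k \<le> 2^n"
  show ?thesis
  proof (cases "k = 2^n")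
    case True then show ?thesis using U_top by simp
  next
    case False
    then have "PP (U n k) (U n (2^n))" using U_chain k by simp
    then show ?thesis using U_top unfolding PP_def by simp
  qed
qed

lemma U_cross: assumes "j * 2^n < k * 2^m" "k \<le> 2^n" shows "PP (U m j) (U n k)"
proof -
  have a: "U m j = U (m+n) (j*2^n)" using U_lift by simp
  have b: "U n k = U (m+n) (k*2^m)" using U_lift[of n m k] by (simp add: add.commute)
  have "k * 2^m \<le> 2^(m+n)" using assms(2) by (simp add: power_add mult.commute)
  then show ?thesis using a b U_chain assms(1) by simp
qed

lemma Y_U0: "bd (Y - U0)"
proof -
  have "bd (Y \<inter> Z \<inter> X)" using ad_Id YZ by blast
  moreover have "Y - U0 \<subseteq> Y \<inter> Z \<inter> X" using U0 Y unfolding Y'_def by blast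
  ultimately show ?thesis using bd_sub by blast
qed

end



context coarse
begin

abbreviation sh where "sh \<equiv> sharp X EE"
abbreviation TT where "TT \<equiv> sharp_topology X EE"

lemma sh_beta: "sh \<subseteq> betaX X" unfolding sharp_def by blast

lemma topsp: "topspace TT = sh"
proof -
  let ?B = "{{p \<in> betaX X. A \<in> p} | A. A \<subseteq> X}"
  have 1: "topspace TT = (\<Union>?B) \<inter> sh"
    unfolding sharp_topology_def beta_topology_def topspace_subtopology topology_generated_by_topspace ..
  have "sh \<subseteq> \<Union>?B"
  proof
    fix p assume p: "p \<in> sh"
    then have "X \<in> p" using sh_uf uf_X by blast
    then have "p \<in> {q \<in> betaX X. X \<in> q}" using p sh_beta by blast
    moreover have "{q \<in> betaX X. X \<in> q} \<in> ?B" by blast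
    ultimately show "p \<in> \<Union>?B" by (rule UnionI[rotated])
  qed
  then show ?thesis using 1 by blast
qed

lemma Bx_open: assumes "A \<subseteq> X" shows "openin TT {r \<in> sh. A \<in> r}"
proof -
  have "openin (beta_topology X) {p \<in> betaX X. A \<in> p}"
    unfolding beta_topology_def openin_topology_generated_by_iff
    by (rule generate_topology_on.Basis) (use assms in blast)
  then have "openin TT ({p \<in> betaX X. A \<in> p} \<inter> sh)"
    unfolding sharp_topology_def by (rule openin_subtopology_Int)
  moreover have "{p \<in> betaX X. A \<in> p} \<inter> sh = {r \<in> sh. A \<in> r}" using sh_beta by blast
  ultimately show ?thesis by simp
qed

lemma basis_gen:
  assumes "generate_topology_on {{p \<in> betaX X. A \<in> p} | A. A \<subseteq> X} s"
  shows "\<forall>p\<in>s. p \<in> betaX X \<longrightarrow> (\<exists>A. A \<subseteq> X \<and> A \<in> p \<and> {r \<in> betaX X. A \<in> r} \<subseteq> s)"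
  using assms
proof (induction rule: generate_topology_on.induct)
  case Empty then show ?case by simp
next
  case (Int a b)
  show ?case
  proof (intro ballI impI)
    fix p assume p: "p \<in> a \<inter> b" "p \<in> betaX X"
    have pa: "p \<in> a" and pb: "p \<in> b" using p(1) by auto
    obtain A1 where A1: "A1 \<subseteq> X" "A1 \<in> p" "{r \<in> betaX X. A1 \<in> r} \<subseteq> a"
      using Int.IH(1) pa p(2) by meson
    obtain A2 where A2: "A2 \<subseteq> X" "A2 \<in> p" "{r \<in> betaX X. A2 \<in> r} \<subseteq> b"
      using Int.IH(2) pb p(2) by meson
    have u: "ultrafilter_on X p" using p(2) unfolding betaX_def by simp
    have i: "A1 \<inter> A2 \<in> p" using uf_int[OF u A1(2) A2(2)] .
    have "{r \<in> betaX X. A1 \<inter> A2 \<in> r} \<subseteq> a \<inter> b"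
    proof
      fix r assume r: "r \<in> {r \<in> betaX X. A1 \<inter> A2 \<in> r}"
      then have ur: "ultrafilter_on X r" and rb: "r \<in> betaX X" and ri: "A1 \<inter> A2 \<in> r"
        unfolding betaX_def by auto
      have "A1 \<in> r" using uf_up[OF ur ri _ A1(1)] by auto
      moreover have "A2 \<in> r" using uf_up[OF ur ri _ A2(1)] by auto
      ultimately have "r \<in> a" "r \<in> b" using A1(3) A2(3) rb by auto
      then show "r \<in> a \<inter> b" by simp
    qed
    moreover have "A1 \<inter> A2 \<subseteq> X" using A1(1) by auto
    ultimately show "\<exists>A. A \<subseteq> X \<and> A \<in> p \<and> {r \<in> betaX X. A \<in> r} \<subseteq> a \<inter> b" using i by blast
  qed
next
  case (UN K)
  show ?case
  proof (intro ballI impI)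
    fix p assume p: "p \<in> \<Union>K" "p \<in> betaX X"
    then obtain k where k: "k \<in> K" "p \<in> k" by auto
    obtain A where A: "A \<subseteq> X" "A \<in> p" "{r \<in> betaX X. A \<in> r} \<subseteq> k"
      using UN.IH[OF k(1)] k(2) p(2) by meson
    have "k \<subseteq> \<Union>K" using k(1) by auto
    then show "\<exists>A. A \<subseteq> X \<and> A \<in> p \<and> {r \<in> betaX X. A \<in> r} \<subseteq> \<Union>K" using A by blast
  qed
next
  case (Basis s)
  then obtain A where A: "s = {p \<in> betaX X. A \<in> p}" "A \<subseteq> X" by auto
  show ?case unfolding A(1) using A(2) by auto
qed

lemma open_T: assumes "openin TT S" "p \<in> S" shows "\<exists>A\<subseteq>X. A \<in> p \<and> {r \<in> sh. A \<in> r} \<subseteq> S"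
proof -
  obtain s where s: "openin (beta_topology X) s" "S = s \<inter> sh"
    using assms(1) unfolding sharp_topology_def openin_subtopology by blast
  have "p \<in> betaX X" using assms(2) s sh_beta by blast
  moreover have "generate_topology_on {{p \<in> betaX X. A \<in> p} | A. A \<subseteq> X} s"
    using s(1) unfolding beta_topology_def openin_topology_generated_by_iff .
  moreover have "p \<in> s" using assms(2) s(2) by auto
  ultimately obtain A where "A \<subseteq> X" "A \<in> p" "{r \<in> betaX X. A \<in> r} \<subseteq> s"
    using basis_gen[of s] by meson
  then show ?thesis using s(2) sh_beta by blast
qed

lemma closed_crit:
  assumes "R \<subseteq> sh \<times> sh"
    and "\<And>p q. p \<in> sh \<Longrightarrow> q \<in> sh \<Longrightarrow> (p,q) \<notin> R \<Longrightarrow>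
      \<exists>A B. A \<subseteq> X \<and> B \<subseteq> X \<and> A \<in> p \<and> B \<in> q \<and>
        (\<forall>p'\<in>sh. \<forall>q'\<in>sh. A \<in> p' \<longrightarrow> B \<in> q' \<longrightarrow> (p',q') \<notin> R)"
  shows "closedin (prod_topology TT TT) R"
  unfolding closedin_def topspace_prod_topology topsp
proof
  show "R \<subseteq> sh \<times> sh" by fact
  show "openin (prod_topology TT TT) (sh \<times> sh - R)"
    unfolding openin_prod_topology_alt
  proof (intro allI impI)
    fix p q assume pq: "(p,q) \<in> sh \<times> sh - R"
    then have pq': "p \<in> sh" "q \<in> sh" "(p,q) \<notin> R" by auto
    obtain A B where AB: "A \<subseteq> X" "B \<subseteq> X" "A \<in> p" "B \<in> q"
      "\<forall>p'\<in>sh. \<forall>q'\<in>sh. A \<in> p' \<longrightarrow> B \<in> q' \<longrightarrow> (p',q') \<notin> R"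
      using assms(2)[OF pq'] by meson
    have o1: "openin TT {r \<in> sh. A \<in> r}" using Bx_open[OF AB(1)] .
    have o2: "openin TT {r \<in> sh. B \<in> r}" using Bx_open[OF AB(2)] .
    have m: "p \<in> {r \<in> sh. A \<in> r}" "q \<in> {r \<in> sh. B \<in> r}" using pq' AB by auto
    have sub: "{r \<in> sh. A \<in> r} \<times> {r \<in> sh. B \<in> r} \<subseteq> sh \<times> sh - R"
    proof
      fix z assume "z \<in> {r \<in> sh. A \<in> r} \<times> {r \<in> sh. B \<in> r}"
      then obtain p' q' where z: "z = (p',q')" "p' \<in> sh" "A \<in> p'" "q' \<in> sh" "B \<in> q'" by auto
      then have "(p',q') \<notin> R" using AB(5) by auto
      then show "z \<in> sh \<times> sh - R" using z by auto
    qed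
    show "\<exists>U V. openin TT U \<and> openin TT V \<and> p \<in> U \<and> q \<in> V \<and> U \<times> V \<subseteq> sh \<times> sh - R"
      using o1 o2 m sub by blast
  qed
qed

lemma closed_use:
  assumes "closedin (prod_topology TT TT) R" "p \<in> sh" "q \<in> sh" "(p,q) \<notin> R"
  shows "\<exists>A B. A \<subseteq> X \<and> B \<subseteq> X \<and> A \<in> p \<and> B \<in> q \<and>
        (\<forall>p'\<in>sh. \<forall>q'\<in>sh. A \<in> p' \<longrightarrow> B \<in> q' \<longrightarrow> (p',q') \<notin> R)"
proof -
  have "openin (prod_topology TT TT) (sh \<times> sh - R)"
    using assms(1) unfolding closedin_def topspace_prod_topology topsp by auto
  moreover have "(p,q) \<in> sh \<times> sh - R" using assms by auto
  ultimately obtain U V where UV: "openin TT U" "openin TT V" "p \<in> U" "q \<in> V" "U \<times> V \<subseteq> sh \<times> sh - R"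
    unfolding openin_prod_topology_alt by meson
  obtain A where A: "A \<subseteq> X" "A \<in> p" "{r \<in> sh. A \<in> r} \<subseteq> U" using open_T[OF UV(1,3)] by meson
  obtain B where B: "B \<subseteq> X" "B \<in> q" "{r \<in> sh. B \<in> r} \<subseteq> V" using open_T[OF UV(2,4)] by meson
  have "\<forall>p'\<in>sh. \<forall>q'\<in>sh. A \<in> p' \<longrightarrow> B \<in> q' \<longrightarrow> (p',q') \<notin> R"
  proof (intro ballI impI)
    fix p' q' assume "p' \<in> sh" "q' \<in> sh" "A \<in> p'" "B \<in> q'"
    then have "p' \<in> U" "q' \<in> V" using A B by auto
    then have "(p',q') \<in> U \<times> V" by simp
    then show "(p',q') \<notin> R" using UV(5) by auto
  qed
  then show ?thesis using A B by blast
qed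

lemma corona_rel_sub:
  assumes "equiv sh R" "closedin (prod_topology TT TT) R" "parallel_rel X EE \<subseteq> R"
  shows "corona_rel X EE \<subseteq> R"
  unfolding corona_rel_def by (rule Inter_lower) (use assms in simp)

lemma corona_rel_refl: assumes "p \<in> sh" shows "(p,p) \<in> corona_rel X EE"
  unfolding corona_rel_def
proof (rule InterI)
  fix R assume "R \<in> {R. equiv sh R \<and> closedin (prod_topology TT TT) R \<and> parallel_rel X EE \<subseteq> R}"
  then have "refl_on sh R" unfolding equiv_def by simp
  then show "(p,p) \<in> R" using assms unfolding refl_on_def by simp
qed

lemma corona_single_rel:
  assumes "corona X EE = {c}" "p \<in> sh" "q \<in> sh" shows "(p,q) \<in> corona_rel X EE"
proof -
  have "corona_rel X EE `` {p} \<in> corona X EE" "corona_rel X EE `` {q} \<in> corona X EE"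
    unfolding corona_def by (rule quotientI, rule assms(2)) (rule quotientI, rule assms(3))
  then have e: "corona_rel X EE `` {q} = corona_rel X EE `` {p}" using assms(1) by auto
  have "q \<in> corona_rel X EE `` {q}" using corona_rel_refl[OF assms(3)] by simp
  then have "q \<in> corona_rel X EE `` {p}" using e by simp
  then show ?thesis by simp
qed

lemma corona_full:
  assumes "\<And>R. equiv sh R \<Longrightarrow> closedin (prod_topology TT TT) R \<Longrightarrow> parallel_rel X EE \<subseteq> R \<Longrightarrow> sh \<times> sh \<subseteq> R"
    and ne: "sh \<noteq> {}"
  shows "\<exists>c. corona X EE = {c}"
proof -
  have eq: "equiv sh (sh \<times> sh)" unfolding equiv_def refl_on_def sym_def trans_def by auto
  have cl: "closedin (prod_topology TT TT) (sh \<times> sh)"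
    using closedin_topspace[of "prod_topology TT TT"] unfolding topspace_prod_topology topsp .
  have par: "parallel_rel X EE \<subseteq> sh \<times> sh" unfolding parallel_rel_def by auto
  have "corona_rel X EE = sh \<times> sh"
  proof
    show "corona_rel X EE \<subseteq> sh \<times> sh" using corona_rel_sub[OF eq cl par] .
    show "sh \<times> sh \<subseteq> corona_rel X EE" unfolding corona_rel_def
      by (rule Inter_greatest) (use assms(1) in simp)
  qed
  moreover have "(sh \<times> sh) `` {p} = sh" if "p \<in> sh" for p using that by auto
  ultimately have "corona X EE = {sh}" unfolding corona_def quotient_def using ne by auto
  then show ?thesis by blast
qed

lemma lift_par:
  assumes r: "r \<in> sh" and E: "E \<in> EE" and EA: "E `` A \<in> r" and A: "A \<subseteq> X"
  shows "\<exists>s. s \<in> sh \<and> A \<in> s \<and> (r, s) \<in> parallel_rel X EE"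
proof -
  have ur: "ultrafilter_on X r" using sh_uf r .
  define G where "G = {B. B \<subseteq> X \<and> (\<exists>R\<in>r. A \<inter> E\<inverse> `` R \<subseteq> B)}"
  have XG: "A \<in> G" unfolding G_def using A uf_X[OF ur] by blast
  have "\<exists>p. ultrafilter_on X p \<and> G \<subseteq> p \<and> (\<forall>P\<in>p. \<not> bd P)"
  proof (rule uf_exists)
    show "G \<subseteq> Pow X" unfolding G_def by blast
    show "G \<noteq> {}" using XG by blast
    show "\<forall>A\<in>G. \<forall>B\<in>G. A \<inter> B \<in> G"
    proof (intro ballI)
      fix B1 B2 assume "B1 \<in> G" "B2 \<in> G"
      then obtain R1 R2 where R: "R1 \<in> r" "R2 \<in> r" "A \<inter> E\<inverse> `` R1 \<subseteq> B1" "A \<inter> E\<inverse> `` R2 \<subseteq> B2"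
        "B1 \<subseteq> X" "B2 \<subseteq> X" unfolding G_def by blast
      have "R1 \<inter> R2 \<in> r" using uf_int[OF ur R(1) R(2)] .
      moreover have "A \<inter> E\<inverse> `` (R1 \<inter> R2) \<subseteq> B1 \<inter> B2" using R(3,4) by blast
      moreover have "B1 \<inter> B2 \<subseteq> X" using R(5) by blast
      ultimately show "B1 \<inter> B2 \<in> G" unfolding G_def by blast
    qed
    show "\<forall>B\<in>G. \<not> bd B"
    proof (intro ballI notI)
      fix B assume B: "B \<in> G" "bd B"
      then obtain R where R: "R \<in> r" "A \<inter> E\<inverse> `` R \<subseteq> B" unfolding G_def by blast
      then have "bd (A \<inter> E\<inverse> `` R)" using bd_sub[OF B(2)] by blast
      then have b1: "bd (E `` (A \<inter> E\<inverse> `` R))" using bd_img E by blast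
      have s1: "R \<inter> E `` A \<subseteq> E `` (A \<inter> E\<inverse> `` R)" by blast
      have "R \<inter> E `` A \<in> r" using uf_int[OF ur R(1) EA] .
      moreover have "bd (R \<inter> E `` A)" using bd_sub[OF b1 s1] .
      ultimately show False using sh_unbd[OF r] by blast
    qed
  qed
  then obtain s where s: "ultrafilter_on X s" "G \<subseteq> s" "\<forall>P\<in>s. \<not> bd P" by blast
  have ssh: "s \<in> sh" unfolding sharp_def betaX_def using s(1,3) by blast
  have As: "A \<in> s" using s(2) XG by blast
  have par: "\<forall>Q\<in>s. E `` Q \<in> r"
  proof (intro ballI; rule ccontr)
    fix Q assume Q: "Q \<in> s" "E `` Q \<notin> r"
    have R0: "X - E `` Q \<in> r" using uf_compl[OF ur E_img_sub[OF E] Q(2)] .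
    have "A \<inter> E\<inverse> `` (X - E `` Q) \<in> G" unfolding G_def using A R0 by blast
    then have "A \<inter> E\<inverse> `` (X - E `` Q) \<in> s" using s(2) by blast
    then have "Q \<inter> (A \<inter> E\<inverse> `` (X - E `` Q)) \<in> s" using uf_int[OF s(1) Q(1)] by blast
    moreover have "Q \<inter> (A \<inter> E\<inverse> `` (X - E `` Q)) = {}" by blast
    ultimately have "{} \<in> s" by simp
    then show False using s(3) bd_empty by blast
  qed
  have "(r, s) \<in> parallel_rel X EE" unfolding parallel_rel_def
    using r ssh E par by blast
  then show ?thesis using ssh As by blast
qed

lemma ultra_corona:
  assumes un: "bl_ultranormal X EE" shows "\<exists>c. corona X EE = {c}"
proof -
  have "\<not> bd X" using un unfolding bl_ultranormal_def bl_unbounded_def by simp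
  then obtain p0 where "p0 \<in> sh" using sh_exists[of X] by auto
  then have ne: "sh \<noteq> {}" by auto
  have key: "sh \<times> sh \<subseteq> R" if eq: "equiv sh R" and cl: "closedin (prod_topology TT TT) R"
    and par: "parallel_rel X EE \<subseteq> R" for R
  proof -
  have symR: "sym R" and trR: "trans R" using eq unfolding equiv_def by auto
  show "sh \<times> sh \<subseteq> R"
  proof (rule ccontr)
    assume "\<not> sh \<times> sh \<subseteq> R"
    then obtain p q where pq: "p \<in> sh" "q \<in> sh" "(p,q) \<notin> R" by blast
    obtain A B where AB: "A \<subseteq> X" "B \<subseteq> X" "A \<in> p" "B \<in> q"
      "\<forall>p'\<in>sh. \<forall>q'\<in>sh. A \<in> p' \<longrightarrow> B \<in> q' \<longrightarrow> (p',q') \<notin> R" using closed_use[OF cl pq] by meson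
    have nA: "\<not> bd A" using sh_unbd[OF pq(1) AB(3)] .
    have nB: "\<not> bd B" using sh_unbd[OF pq(2) AB(4)] .
    have "\<forall>Y Z. Y \<subseteq> X \<and> Z \<subseteq> X \<and> \<not> bd Y \<and> \<not> bd Z \<longrightarrow> \<not> ad Y Z"
      using un unfolding bl_ultranormal_def by simp
    then have "\<not> ad A B" using AB(1,2) nA nB by simp
    then obtain E where E: "E \<in> EE" "\<not> bd (E `` A \<inter> E `` B)" unfolding asymp_disjoint_def by auto
    have "E `` A \<inter> E `` B \<subseteq> X" using E_img_sub[OF E(1)] by blast
    then obtain r where r: "r \<in> sh" "E `` A \<inter> E `` B \<in> r" using sh_exists[OF E(2)] by auto
    have ur: "ultrafilter_on X r" using sh_uf r(1) .
    have EAr: "E `` A \<in> r" using uf_up[OF ur r(2) _ E_img_sub[OF E(1)]] by blast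
    have EBr: "E `` B \<in> r" using uf_up[OF ur r(2) _ E_img_sub[OF E(1)]] by blast
    obtain sA where sA: "sA \<in> sh" "A \<in> sA" "(r,sA) \<in> parallel_rel X EE"
      using lift_par[OF r(1) E(1) EAr AB(1)] by blast
    obtain sB where sB: "sB \<in> sh" "B \<in> sB" "(r,sB) \<in> parallel_rel X EE"
      using lift_par[OF r(1) E(1) EBr AB(2)] by blast
    have "(r,sA) \<in> R" "(r,sB) \<in> R" using sA(3) sB(3) par by blast+
    then have "(sA, r) \<in> R" "(r, sB) \<in> R" using symR unfolding sym_def by blast+
    then have "(sA, sB) \<in> R" using trR unfolding trans_def by blast
    then show False using AB(5) sA(1,2) sB(1,2) by blast
  qed
  qed
  show ?thesis by (rule corona_full[OF key ne])
qed

end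



context coarse
begin

lemma so_ad:
  assumes so: "slowly_oscillating X EE f" and ab: "a < b"
  shows "ad {x\<in>X. f x < a} {x\<in>X. f x > b}"
  unfolding asymp_disjoint_def
proof
  fix E assume E: "E \<in> EE"
  have Ei: "E\<inverse> \<in> EE" using E_inv[OF E] .
  have "b - a > 0" using ab by simp
  then obtain B where B: "bd B" "\<forall>x\<in>X - B. diam_less f (E\<inverse> `` {x}) (b - a)"
    using so Ei unfolding slowly_oscillating_def by meson
  have "E `` {x\<in>X. f x < a} \<inter> E `` {x\<in>X. f x > b} \<subseteq> B"
  proof
    fix z assume z: "z \<in> E `` {x\<in>X. f x < a} \<inter> E `` {x\<in>X. f x > b}"
    then obtain y w where yw: "(y,z) \<in> E" "f y < a" "(w,z) \<in> E" "f w > b" by blast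
    have zX: "z \<in> X" using E_sub[OF E] yw(1) by blast
    show "z \<in> B"
    proof (rule ccontr)
      assume "z \<notin> B"
      then have "diam_less f (E\<inverse> `` {z}) (b - a)" using B(2) zX by blast
      then obtain d where d: "d < b - a" "\<forall>u\<in>E\<inverse> `` {z}. \<forall>v\<in>E\<inverse> `` {z}. \<bar>f u - f v\<bar> \<le> d"
        unfolding diam_less_def by blast
      have "y \<in> E\<inverse> `` {z}" "w \<in> E\<inverse> `` {z}" using yw by auto
      then have "\<bar>f w - f y\<bar> \<le> d" using d(2) by blast
      then show False using d(1) yw(2,4) by linarith
    qed
  qed
  then show "bd (E `` {x\<in>X. f x < a} \<inter> E `` {x\<in>X. f x > b})" using bd_sub[OF B(1)] by blast
qed

lemma ultra_const:
  assumes un: "bl_ultranormal X EE" and bf: "bounded_fun_on X f" and so: "slowly_oscillating X EE f"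
  shows "const_at_infinity X EE f"
proof -
  have nX: "\<not> bd X" using un unfolding bl_ultranormal_def bl_unbounded_def by simp
  have unad: "\<And>Y Z. Y \<subseteq> X \<Longrightarrow> Z \<subseteq> X \<Longrightarrow> \<not> bd Y \<Longrightarrow> \<not> bd Z \<Longrightarrow> \<not> ad Y Z"
    using un unfolding bl_ultranormal_def by simp
  obtain M where M: "\<forall>x\<in>X. \<bar>f x\<bar> \<le> M" using bf unfolding bounded_fun_on_def by blast
  define S where "S = {a. bd {x\<in>X. f x < a}}"
  have e0: "{x\<in>X. f x < - M - 1} = {}" using M by force
  have S1: "- M - 1 \<in> S" unfolding S_def mem_Collect_eq e0 by (rule bd_empty)
  have S2: "a \<le> M" if "a \<in> S" for a
  proof (rule ccontr)
    assume "\<not> a \<le> M"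
    then have "{x\<in>X. f x < a} = X" using M by force
    then show False using that nX unfolding S_def by simp
  qed
  have bdd: "bdd_above S" using S2 unfolding bdd_above_def by blast
  have Sne: "S \<noteq> {}" using S1 by blast
  define c where "c = Sup S"
  have "bd {x\<in>X. \<bar>f x - c\<bar> > e}" if e: "e > 0" for e
  proof -
    have "c - e < Sup S" using e unfolding c_def by simp
    then obtain a where a: "a \<in> S" "c - e < a" using less_cSup_iff[OF Sne bdd] by blast
    have lo: "bd {x\<in>X. f x < c - e}"
      using bd_sub[of "{x\<in>X. f x < a}" "{x\<in>X. f x < c - e}"] a unfolding S_def by force
    have "c + e/2 \<notin> S"
    proof
      assume "c + e/2 \<in> S"
      then have "c + e/2 \<le> Sup S" using cSup_upper[OF _ bdd] by blast
      then show False using e unfolding c_def by simp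
    qed
    then have nlo: "\<not> bd {x\<in>X. f x < c + e/2}" unfolding S_def by simp
    have adj: "ad {x\<in>X. f x < c + e/2} {x\<in>X. f x > c + e}" using so_ad[OF so] e by simp
    have hi: "bd {x\<in>X. f x > c + e}"
    proof (rule ccontr)
      assume "\<not> bd {x\<in>X. f x > c + e}"
      then have "\<not> ad {x\<in>X. f x < c + e/2} {x\<in>X. f x > c + e}" using unad nlo by simp
      then show False using adj by simp
    qed
    have "{x\<in>X. \<bar>f x - c\<bar> > e} \<subseteq> {x\<in>X. f x < c - e} \<union> {x\<in>X. f x > c + e}" by auto
    then show ?thesis using bd_sub[OF bd_un[OF lo hi]] by blast
  qed
  then show ?thesis unfolding const_at_infinity_def by blast
qed

end

context nsep
begin

lemma PP_sub: "PP A B \<Longrightarrow> A \<subseteq> B" unfolding PP_def by simp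
lemma PP_X: "PP A B \<Longrightarrow> B \<subseteq> X" unfolding PP_def by simp
lemma PP_prec: "PP A B \<Longrightarrow> prec A B" unfolding PP_def by simp

lemma U_X: "k \<le> 2^n \<Longrightarrow> U n k \<subseteq> X" using U_sub by blast

lemma U_dbl: "U (Suc n) (2*k) = U n k"
  using U_lift[of n 1 k] by (simp add: mult.commute)

definition RR where "RR = {(p,q). p \<in> sh \<and> q \<in> sh \<and> (\<forall>n k l. k < l \<and> l \<le> 2^n \<longrightarrow>
   (U n k \<in> p \<longrightarrow> U n l \<in> q) \<and> (U n k \<in> q \<longrightarrow> U n l \<in> p))}"

lemma U_in_up: assumes "p \<in> sh" "k < l" "l \<le> 2^n" "U n k \<in> p" shows "U n l \<in> p"
proof -
  have "PP (U n k) (U n l)" using U_chain assms by simp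
  then show ?thesis using uf_up[OF sh_uf[OF assms(1)] assms(4)] PP_sub PP_X by blast
qed

lemma RR_equiv: "equiv sh RR"
proof (rule equivI)
  show "RR \<subseteq> sh \<times> sh" unfolding RR_def by auto
  show "refl_on sh RR" unfolding refl_on_def RR_def using U_in_up by auto
  show "sym RR" unfolding sym_def RR_def by auto
  show "trans RR" unfolding trans_def
  proof (intro allI impI)
    fix p q w assume pq: "(p,q) \<in> RR" and qw: "(q,w) \<in> RR"
    have p: "p \<in> sh" and w: "w \<in> sh" using pq qw unfolding RR_def by auto
    have H1: "\<And>n k l. k < l \<Longrightarrow> l \<le> 2^n \<Longrightarrow> (U n k \<in> p \<longrightarrow> U n l \<in> q) \<and> (U n k \<in> q \<longrightarrow> U n l \<in> p)"
      using pq unfolding RR_def by blast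
    have H2: "\<And>n k l. k < l \<Longrightarrow> l \<le> 2^n \<Longrightarrow> (U n k \<in> q \<longrightarrow> U n l \<in> w) \<and> (U n k \<in> w \<longrightarrow> U n l \<in> q)"
      using qw unfolding RR_def by blast
    have "(U n k \<in> p \<longrightarrow> U n l \<in> w) \<and> (U n k \<in> w \<longrightarrow> U n l \<in> p)" if kl: "k < l" "l \<le> 2^n" for n k l
    proof -
      have a: "2*k < 2*k+1" "2*k+1 \<le> 2^Suc n" using kl by auto
      have b: "2*k+1 < 2*l" "2*l \<le> 2^Suc n" using kl by auto
      show ?thesis
      proof (intro conjI impI)
        assume "U n k \<in> p"
        then have "U (Suc n) (2*k) \<in> p" using U_dbl by simp
        then have "U (Suc n) (2*k+1) \<in> q" using H1[OF a] by blast
        then have "U (Suc n) (2*l) \<in> w" using H2[OF b] by blast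
        then show "U n l \<in> w" using U_dbl by simp
      next
        assume "U n k \<in> w"
        then have "U (Suc n) (2*k) \<in> w" using U_dbl by simp
        then have "U (Suc n) (2*k+1) \<in> q" using H2[OF a] by blast
        then have "U (Suc n) (2*l) \<in> p" using H1[OF b] by blast
        then show "U n l \<in> p" using U_dbl by simp
      qed
    qed
    then show "(p,w) \<in> RR" unfolding RR_def using p w by blast
  qed
qed

lemma RR_closed: "closedin (prod_topology TT TT) RR"
proof (rule closed_crit)
  show "RR \<subseteq> sh \<times> sh" unfolding RR_def by auto
next
  fix p q assume pq: "p \<in> sh" "q \<in> sh" "(p,q) \<notin> RR"
  then obtain n k l where nkl: "k < l" "l \<le> 2^n"
    "\<not> ((U n k \<in> p \<longrightarrow> U n l \<in> q) \<and> (U n k \<in> q \<longrightarrow> U n l \<in> p))"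
    unfolding RR_def by blast
  have UkX: "U n k \<subseteq> X" and UlX: "U n l \<subseteq> X" using U_X nkl by auto
  show "\<exists>A B. A \<subseteq> X \<and> B \<subseteq> X \<and> A \<in> p \<and> B \<in> q \<and>
        (\<forall>p'\<in>sh. \<forall>q'\<in>sh. A \<in> p' \<longrightarrow> B \<in> q' \<longrightarrow> (p',q') \<notin> RR)"
  proof (cases "U n k \<in> p \<and> U n l \<notin> q")
    case True
    have B: "X - U n l \<in> q" using uf_compl[OF sh_uf[OF pq(2)] UlX] True by blast
    have "\<forall>p'\<in>sh. \<forall>q'\<in>sh. U n k \<in> p' \<longrightarrow> X - U n l \<in> q' \<longrightarrow> (p',q') \<notin> RR"
    proof (intro ballI impI notI)
      fix p' q' assume h: "p' \<in> sh" "q' \<in> sh" "U n k \<in> p'" "X - U n l \<in> q'" "(p',q') \<in> RR"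
      then have "U n l \<in> q'" using nkl(1,2) unfolding RR_def by blast
      then show False using uf_not_both[OF sh_uf[OF h(2)]] h(4) by blast
    qed
    then show ?thesis using True B UkX by blast
  next
    case False
    then have F: "U n k \<in> q" "U n l \<notin> p" using nkl(3) by auto
    have A: "X - U n l \<in> p" using uf_compl[OF sh_uf[OF pq(1)] UlX] F by blast
    have "\<forall>p'\<in>sh. \<forall>q'\<in>sh. X - U n l \<in> p' \<longrightarrow> U n k \<in> q' \<longrightarrow> (p',q') \<notin> RR"
    proof (intro ballI impI notI)
      fix p' q' assume h: "p' \<in> sh" "q' \<in> sh" "X - U n l \<in> p'" "U n k \<in> q'" "(p',q') \<in> RR"
      then have "U n l \<in> p'" using nkl(1,2) unfolding RR_def by blast
      then show False using uf_not_both[OF sh_uf[OF h(1)]] h(3) by blast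
    qed
    then show ?thesis using F A UkX by blast
  qed
qed

lemma RR_par: "parallel_rel X EE \<subseteq> RR"
proof
  fix z assume "z \<in> parallel_rel X EE"
  then obtain p q E where z: "z = (p,q)" "p \<in> sh" "q \<in> sh" "E \<in> EE" "\<forall>Q\<in>q. E `` Q \<in> p"
    unfolding parallel_rel_def by blast
  have up: "ultrafilter_on X p" and uq: "ultrafilter_on X q" using sh_uf z by auto
  have "(U n k \<in> p \<longrightarrow> U n l \<in> q) \<and> (U n k \<in> q \<longrightarrow> U n l \<in> p)" if kl: "k < l" "l \<le> 2^n" for n k l
  proof -
    have pr: "prec (U n k) (U n l)" using U_chain[OF kl] PP_prec by blast
    then have bdE: "bd (E `` U n k \<inter> E `` (X - U n l))" using z(4) unfolding asymp_disjoint_def by blast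
    have UkX: "U n k \<subseteq> X" and UlX: "U n l \<subseteq> X" using U_X kl by auto
    show ?thesis
    proof
      show "U n k \<in> p \<longrightarrow> U n l \<in> q"
      proof
        assume k: "U n k \<in> p"
        show "U n l \<in> q"
        proof (rule ccontr)
          assume "U n l \<notin> q"
          then have "X - U n l \<in> q" using uf_compl[OF uq UlX] by blast
          then have "E `` (X - U n l) \<in> p" using z(5) by blast
          then have i: "U n k \<inter> E `` (X - U n l) \<in> p" using uf_int[OF up k] by blast
          have "U n k \<inter> E `` (X - U n l) \<subseteq> E `` U n k \<inter> E `` (X - U n l)"
            using E_self[OF z(4) UkX] by blast
          then have "bd (U n k \<inter> E `` (X - U n l))" using bd_sub[OF bdE] by blast
          then show False using sh_unbd[OF z(2) i] by blast
        qed
      qed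
      show "U n k \<in> q \<longrightarrow> U n l \<in> p"
      proof
        assume k: "U n k \<in> q"
        show "U n l \<in> p"
        proof (rule ccontr)
          assume "U n l \<notin> p"
          then have c: "X - U n l \<in> p" using uf_compl[OF up UlX] by blast
          have "E `` U n k \<in> p" using z(5) k by blast
          then have i: "E `` U n k \<inter> (X - U n l) \<in> p" using uf_int[OF up _ c] by blast
          have "E `` U n k \<inter> (X - U n l) \<subseteq> E `` U n k \<inter> E `` (X - U n l)"
            using E_self[OF z(4), of "X - U n l"] by blast
          then have "bd (E `` U n k \<inter> (X - U n l))" using bd_sub[OF bdE] by blast
          then show False using sh_unbd[OF z(2) i] by blast
        qed
      qed
    qed
  qed
  then show "z \<in> RR" unfolding RR_def using z(1,2,3) by blast
qed

lemma not_single: "\<not> (\<exists>c. corona X EE = {c})"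
proof
  assume "\<exists>c. corona X EE = {c}"
  then obtain c where c: "corona X EE = {c}" by blast
  obtain p where p: "p \<in> sh" "Y \<in> p" using sh_exists[OF Y(2) Y(1)] by blast
  obtain q where q: "q \<in> sh" "Z \<in> q" using sh_exists[OF Z(2) Z(1)] by blast
  have "(p,q) \<in> corona_rel X EE" using corona_single_rel[OF c p(1) q(1)] .
  then have pqR: "(p,q) \<in> RR" using corona_rel_sub[OF RR_equiv RR_closed RR_par] by blast
  have up: "ultrafilter_on X p" using sh_uf p(1) .
  have U0p: "U0 \<in> p"
  proof (rule ccontr)
    assume "U0 \<notin> p"
    then have "X - U0 \<in> p" using uf_compl[OF up] U_X[of 0 0] U_bot by auto
    then have i: "Y \<inter> (X - U0) \<in> p" using uf_int[OF up p(2)] by blast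
    have "bd (Y \<inter> (X - U0))" using bd_sub[OF Y_U0] by blast
    then show False using sh_unbd[OF p(1) i] by blast
  qed
  have "U 0 0 \<in> p" using U0p U_bot by simp
  then have "U 0 1 \<in> q" using pqR unfolding RR_def by auto
  then have "X - Z \<in> q" using U_top[of 0] by simp
  then show False using uf_not_both[OF sh_uf[OF q(1)]] q(2) Z(1)
    by (metis Diff_Diff_Int inf.absorb_iff2)
qed

end



context nsep
begin

definition SS where "SS x = insert 1 {real k / 2^n | k n. k \<le> 2^n \<and> x \<in> U n k}"
definition ff where "ff x = Inf (SS x)"

lemma SS_nonneg: "t \<in> SS x \<Longrightarrow> 0 \<le> t" unfolding SS_def by auto
lemma SS_bdd: "bdd_below (SS x)" unfolding bdd_below_def using SS_nonneg by blast
lemma SS_ne: "SS x \<noteq> {}" unfolding SS_def by auto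

lemma ff_nonneg: "0 \<le> ff x"
  unfolding ff_def by (rule cInf_greatest[OF SS_ne]) (rule SS_nonneg)

lemma ff_le1: "ff x \<le> 1"
  unfolding ff_def by (rule cInf_lower[OF _ SS_bdd]) (simp add: SS_def)

lemma ff_upper: assumes "x \<in> U n l" "l \<le> 2^n" shows "ff x \<le> real l / 2^n"
proof -
  have "real l / 2^n \<in> SS x" unfolding SS_def using assms by blast
  then show ?thesis unfolding ff_def by (rule cInf_lower[OF _ SS_bdd])
qed

lemma ff_lower: assumes "ff x < real k / 2^n" "k \<le> 2^n" shows "x \<in> U n k"
proof -
  obtain t where t: "t \<in> SS x" "t < real k / 2^n"
    using assms(1) cInf_less_iff[OF SS_ne SS_bdd] unfolding ff_def by blast
  have kle: "real k / 2^n \<le> 1" using assms(2)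
    by (simp add: divide_le_eq_1)
  show ?thesis
  proof (cases "t = 1")
    case True then show ?thesis using t kle by simp
  next
    case False
    then obtain j m where jm: "t = real j / 2^m" "j \<le> 2^m" "x \<in> U m j" using t(1) unfolding SS_def by blast
    have "real j / 2^m < real k / 2^n" using t jm by simp
    then have "real j * 2^n < real k * 2^m" by (simp add: field_simps)
    then have "real (j * 2^n) < real (k * 2^m)" by simp
    then have "j * 2^n < k * 2^m" by linarith
    then have "PP (U m j) (U n k)" using U_cross assms(2) by blast
    then show ?thesis using jm(3) PP_sub by blast
  qed
qed

lemma ff_Z: "x \<in> Z \<Longrightarrow> ff x = 1"
proof -
  assume x: "x \<in> Z"
  have "SS x = {1}" unfolding SS_def using U_sub x by auto
  then show ?thesis unfolding ff_def by simp
qed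

lemma ff_U0: "x \<in> U0 \<Longrightarrow> ff x = 0"
proof -
  assume "x \<in> U0"
  then have "x \<in> U 0 0" using U_bot by simp
  then have "ff x \<le> real 0 / 2^0" using ff_upper[of x 0 0] by simp
  then show ?thesis using ff_nonneg[of x] by simp
qed

lemma floor_step: assumes "0 \<le> t" "d > 0" shows "\<exists>k::nat. t * d < real k \<and> real k \<le> t * d + 1"
proof -
  define k where "k = nat \<lfloor>t * d\<rfloor> + 1"
  have "0 \<le> t * d" using assms by simp
  then have "real k = real_of_int \<lfloor>t * d\<rfloor> + 1" unfolding k_def by simp
  moreover have "t * d < real_of_int \<lfloor>t * d\<rfloor> + 1" "real_of_int \<lfloor>t * d\<rfloor> \<le> t * d" by linarith+
  ultimately show ?thesis by (intro exI[of _ k]) linarith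
qed

lemma ff_so: "slowly_oscillating X EE ff"
  unfolding slowly_oscillating_def
proof (intro ballI allI impI)
  fix E :: "('a \<times> 'a) set" and e :: real assume E: "E \<in> EE" and e: "e > 0"
  have Ei: "E\<inverse> \<in> EE" using E_inv[OF E] .
  obtain n where n: "(1/2::real)^n < e/2" using real_arch_pow_inv[of "e/2" "1/2"] e by auto
  have pn: "(0::real) < 2^n" by simp
  have dlt: "2 / (2::real)^n < e" using n by (simp add: power_one_over field_simps)
  define B where "B = (\<Union>k<2^n. E\<inverse> `` U n k \<inter> E\<inverse> `` (X - U n (Suc k)))"
  have bdB: "bd B" unfolding B_def
  proof (rule bd_UN)
    fix k assume k: "k < (2::nat)^n"
    have "prec (U n k) (U n (Suc k))" using U_chain[of k "Suc k" n] k PP_prec by simp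
    then show "bd (E\<inverse> `` U n k \<inter> E\<inverse> `` (X - U n (Suc k)))" using Ei unfolding asymp_disjoint_def by blast
  qed
  have main: "ff z \<le> ff y + 2 / 2^n" if x: "x \<in> X - B" and yz: "y \<in> E `` {x}" "z \<in> E `` {x}" for x y z
  proof (rule ccontr)
    assume c: "\<not> ff z \<le> ff y + 2 / 2^n"
    obtain k :: nat where k: "ff y * 2^n < real k" "real k \<le> ff y * 2^n + 1"
      using floor_step[OF ff_nonneg pn] by blast
    have k1: "ff y < real k / 2^n" using k(1) pn by (simp add: field_simps)
    have "real (Suc k) \<le> ff y * 2^n + 2" using k(2) by simp
    then have "real (Suc k) / 2^n \<le> (ff y * 2^n + 2) / 2^n" using pn by (simp add: divide_right_mono)
    also have "\<dots> = ff y + 2 / 2^n" using pn by (simp add: add_divide_distrib)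
    finally have k2: "real (Suc k) / 2^n \<le> ff y + 2 / 2^n" .
    have k3: "real (Suc k) / 2^n < 1" using k2 c ff_le1[of z] by linarith
    then have "real (Suc k) < 2^n" using pn by (simp add: field_simps)
    then have "real (Suc k) < real ((2::nat)^n)" by simp
    then have kn: "Suc k < 2^n" by linarith
    have yU: "y \<in> U n k" using ff_lower[OF k1] kn by simp
    have zU: "z \<notin> U n (Suc k)"
    proof
      assume "z \<in> U n (Suc k)"
      moreover have "Suc k \<le> 2^n" using kn by simp
      ultimately have "ff z \<le> real (Suc k) / 2^n" by (rule ff_upper)
      then show False using k2 c by linarith
    qed
    have zX: "z \<in> X" using yz(2) E_sub[OF E] by blast
    have "x \<in> E\<inverse> `` U n k" using yU yz(1) by blast
    moreover have "x \<in> E\<inverse> `` (X - U n (Suc k))" using zU zX yz(2) by blast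
    moreover have "k < 2^n" using kn by simp
    ultimately have "x \<in> B" unfolding B_def by blast
    then show False using x by blast
  qed
  show "\<exists>B. bd B \<and> (\<forall>x\<in>X - B. diam_less ff (E `` {x}) e)"
  proof (intro exI conjI ballI)
    show "bd B" by (rule bdB)
    fix x assume x: "x \<in> X - B"
    show "diam_less ff (E `` {x}) e" unfolding diam_less_def
    proof (intro exI conjI ballI)
      show "2 / 2^n < e" by (rule dlt)
      fix y z assume "y \<in> E `` {x}" "z \<in> E `` {x}"
      then have "ff z \<le> ff y + 2 / 2^n" "ff y \<le> ff z + 2 / 2^n" using main x by blast+
      then show "\<bar>ff y - ff z\<bar> \<le> 2 / 2^n" by linarith
    qed
  qed
qed

lemma ff_bounded: "bounded_fun_on X ff"
  unfolding bounded_fun_on_def using ff_nonneg ff_le1 by (intro exI[of _ 1]) (simp add: abs_le_iff)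

lemma ff_not_const: "\<not> const_at_infinity X EE ff"
proof
  assume "const_at_infinity X EE ff"
  then obtain c where c: "bd {x\<in>X. \<bar>ff x - c\<bar> > 1/3}" unfolding const_at_infinity_def
    by (metis zero_less_divide_1_iff zero_less_numeral)
  show False
  proof (cases "c \<ge> 1/2")
    case True
    have "Y \<inter> U0 \<subseteq> {x\<in>X. \<bar>ff x - c\<bar> > 1/3}" using ff_U0 True Y(1) by auto
    then have "bd (Y \<inter> U0)" using bd_sub[OF c] by blast
    then have "bd ((Y \<inter> U0) \<union> (Y - U0))" using bd_un Y_U0 by blast
    moreover have "(Y \<inter> U0) \<union> (Y - U0) = Y" by blast
    ultimately show False using Y(2) by simp
  next
    case False
    have "Z \<subseteq> {x\<in>X. \<bar>ff x - c\<bar> > 1/3}" using ff_Z False Z(1) by auto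
    then show False using bd_sub[OF c] Z(2) by blast
  qed
qed

lemma not_1: "\<not> (\<forall>f. bounded_fun_on X f \<and> slowly_oscillating X EE f \<longrightarrow> const_at_infinity X EE f)"
  using ff_bounded ff_so ff_not_const by blast

end


theorem theorem1:
  fixes X :: "'a set" and \<E> :: "('a \<times> 'a) set set"
  assumes "ballean X \<E>" and "bl_unbounded X \<E>" and "bl_normal X \<E>"
  shows "((\<forall>f. bounded_fun_on X f \<and> slowly_oscillating X \<E> f \<longrightarrow> const_at_infinity X \<E> f)
            \<longleftrightarrow> (\<exists>c. corona X \<E> = {c}))
       \<and> ((\<exists>c. corona X \<E> = {c}) \<longleftrightarrow> bl_ultranormal X \<E>)"
proof -
  have Xne: "X \<noteq> {}" using assms(2) unfolding bl_unbounded_def bl_bounded_def by auto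
  interpret coarse X \<E> by (rule coarse.intro[OF assms(1) Xne])
  show ?thesis
  proof (cases "bl_ultranormal X \<E>")
    case True
    have 1: "\<forall>f. bounded_fun_on X f \<and> slowly_oscillating X \<E> f \<longrightarrow> const_at_infinity X \<E> f"
      using ultra_const[OF True] by blast
    have 2: "\<exists>c. corona X \<E> = {c}" using ultra_corona[OF True] .
    show ?thesis using 1 2 True by blast
  next
    case False
    then obtain Y Z where YZ: "Y \<subseteq> X" "Z \<subseteq> X" "\<not> bl_bounded X \<E> Y" "\<not> bl_bounded X \<E> Z"
      "asymp_disjoint X \<E> Y Z"
      using assms(2) unfolding bl_ultranormal_def by blast
    interpret nsep X \<E> Y Z
      by (rule nsep.intro[OF coarse_axioms], unfold nsep_axioms_def) (use assms(3) YZ in blast)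
    show ?thesis using not_1 not_single False by blast
  qed
qed

end
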